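(* Fix $K\ge 3$ and a configuration $\psi=(i,\eta_1,\eta_2)$ with $\eta_1\ne\eta_2$. Then $$D^*(i,\eta_1,\eta_2)=\max_{0\le\lambda(i)\le1}\Big[\lambda(i)D(\eta_1\|\tilde\eta)+(1-\lambda(i))\tfrac{K-2}{K-1}D(\eta_2\|\tilde\eta)\Big],$$ where $\tilde\eta=\eta(\tilde\kappa)$ and $$\tilde\kappa=\frac{\lambda(i)\kappa_1+(1-\lambda(i))\frac{K-2}{K-1}\kappa_2}{\lambda(i)+(1-\lambda(i))\frac{K-2}{K-1}}.$$ Moreover, the maximiser $\lambda^*(i,\eta_1,\eta_2)$ is of the form $\lambda^*(i,\eta_1,\eta_2)(j)=\frac{1-\lambda^*(i,\eta_1,\eta_2)(i)}{K-1}$ for all $j\ne i$.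
   Context: Exponential family: densities $f(x|\eta)=h(x)\exp(\eta^T\mathbf{T}(x)-A(\eta))$, natural parameter $\eta\in\mathbb{R}^d$ (or an open convex subset), $\mathbf{T}(x)\in\mathbb{R}^d$, log-partition function $A(\eta)=\log\int h(x)e^{\eta^T\mathbf{T}(x)}dx$ (convex). Its convex conjugate is $F(\kappa)=\sup_\eta\{\eta^T\kappa-A(\eta)\}$; $A$ and $F$ are assumed twice continuously differentiable wherever finite. The expectation parameter is $\kappa(\eta)=\nabla A(\eta)$ and the inverse map is $\eta(\kappa)=\nabla F(\kappa)$; $\kappa_1=\kappa(\eta_1)$, $\kappa_2=\kappa(\eta_2)$. Relative entropy: $D(\eta_1\|\eta_2)=(\eta_1-\eta_2)^T\kappa_1-A(\eta_1)+A(\eta_2)$. With $\mathcal{P}(K)$ the set of probability vectors on $\{1,\dots,K\}$, $D^*(i,\eta_1,\eta_2)=\max_{\lambda\in\mathcal{P}(K)}\min_{\eta_1',\eta_2',\,j\ne i}\big[\lambda(i)D(\eta_1\|\eta_2')+\lambda(j)D(\eta_2\|\eta_1')+(1-\lambda(i)-\lambda(j))D(\eta_2\|\eta_2')\big]$, and $\lambda^*(i,\eta_1,\eta_2)\in\mathcal{P}(K)$ denotes the $\lambda$ achieving this maximum. *)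

theory Defs
  imports "HOL-Analysis.Analysis"
begin

text \<open>Relative entropy between members of the exponential family with
  log-partition function A and expectation map kappa = gradient of A:
  D(eta1 || eta2) = (eta1 - eta2)^T kappa(eta1) - A(eta1) + A(eta2).\<close>
definition relent ::
  "(real^'d \<Rightarrow> real) \<Rightarrow> (real^'d \<Rightarrow> real^'d) \<Rightarrow> real^'d \<Rightarrow> real^'d \<Rightarrow> real" where
  "relent A kappa e1 e2 = (e1 - e2) \<bullet> kappa e1 - A e1 + A e2"

definition conj :: "(real^'d) set \<Rightarrow> (real^'d \<Rightarrow> real) \<Rightarrow> real^'d \<Rightarrow> real" where
  "conj N A k = Sup ((\<lambda>e. e \<bullet> k - A e) ` N)"

definition probvec :: "nat \<Rightarrow> (nat \<Rightarrow> real) set" where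
  "probvec K = {l. (\<forall>j\<in>{1..K}. 0 \<le> l j) \<and> (\<forall>j. j \<notin> {1..K} \<longrightarrow> l j = 0)
                   \<and> (\<Sum>j=1..K. l j) = 1}"

definition Dinner ::
  "(real^'d) set \<Rightarrow> (real^'d \<Rightarrow> real) \<Rightarrow> (real^'d \<Rightarrow> real^'d) \<Rightarrow> nat \<Rightarrow> nat
     \<Rightarrow> real^'d \<Rightarrow> real^'d \<Rightarrow> (nat \<Rightarrow> real) \<Rightarrow> real" where
  "Dinner N A kappa K i e1 e2 l =
     Inf {l i * relent A kappa e1 e2' + l j * relent A kappa e2 e1'
          + (1 - l i - l j) * relent A kappa e2 e2'
         | e1' e2' j. e1' \<in> N \<and> e2' \<in> N \<and> j \<in> {1..K} \<and> j \<noteq> i}"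

definition Dstar ::
  "(real^'d) set \<Rightarrow> (real^'d \<Rightarrow> real) \<Rightarrow> (real^'d \<Rightarrow> real^'d) \<Rightarrow> nat \<Rightarrow> nat
     \<Rightarrow> real^'d \<Rightarrow> real^'d \<Rightarrow> real" where
  "Dstar N A kappa K i e1 e2 = Sup (Dinner N A kappa K i e1 e2 ` probvec K)"

end

theory Submission imports Defs begin

lemma tangent_ineq:
  fixes A :: "real^'d \<Rightarrow> real"
  assumes cv: "convex_on N A" and e: "e \<in> N" and x: "x \<in> N"
    and d: "(A has_derivative (\<lambda>h. k \<bullet> h)) (at e)"
  shows "A e + k \<bullet> (x - e) \<le> A x"
proof -
  define \<phi> where "\<phi> s = A (e + s *\<^sub>R (x - e))" for s :: real
  have lin: "((\<lambda>s::real. e + s *\<^sub>R (x - e)) has_derivative (\<lambda>s. s *\<^sub>R (x - e))) (at 0)"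
    by (auto intro!: derivative_eq_intros)
  have d0: "(A has_derivative (\<lambda>h. k \<bullet> h)) (at (e + (0::real) *\<^sub>R (x - e)))" using d by simp
  have "(\<phi> has_derivative (\<lambda>s. k \<bullet> (s *\<^sub>R (x - e)))) (at 0)"
    unfolding \<phi>_def using diff_chain_at[OF lin d0] by (simp add: o_def)
  moreover have "(\<lambda>s. k \<bullet> (s *\<^sub>R (x - e))) = (*) (k \<bullet> (x - e))"
    by (auto simp: fun_eq_iff)
  ultimately have "(\<phi> has_field_derivative (k \<bullet> (x - e))) (at 0)"
    by (simp add: has_field_derivative_def)
  then have lim: "((\<lambda>y. (\<phi> y - \<phi> 0) / (y - 0)) \<longlongrightarrow> k \<bullet> (x - e)) (at_right 0)"
    unfolding has_field_derivative_iff by (rule tendsto_mono[OF at_le[OF subset_UNIV]])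
  have "eventually (\<lambda>y. y \<in> {0<..<1::real}) (at_right 0)"
    by (rule eventually_at_right_real) simp
  then have ev: "eventually (\<lambda>y. (\<phi> y - \<phi> 0) / (y - 0) \<le> A x - A e) (at_right 0)"
  proof eventually_elim
    case (elim y)
    have "\<phi> y = A ((1 - y) *\<^sub>R e + y *\<^sub>R x)" by (simp add: \<phi>_def algebra_simps)
    also have "\<dots> \<le> (1-y) * A e + y * A x" using convex_onD[OF cv] elim e x by auto
    finally have "\<phi> y - \<phi> 0 \<le> y * (A x - A e)" by (simp add: \<phi>_def algebra_simps)
    then show ?case using elim by (simp add: divide_le_eq mult.commute)
  qed
  have "k \<bullet> (x - e) \<le> A x - A e" by (rule tendsto_upperbound[OF lim ev]) simp
  then show ?thesis by simp
qed

lemma relent_nonneg: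
  fixes A :: "real^'d \<Rightarrow> real"
  assumes cv: "convex_on N A" and e: "e \<in> N" and x: "x \<in> N"
    and d: "(A has_derivative (\<lambda>h. kappa e \<bullet> h)) (at e)"
  shows "0 \<le> relent A kappa e x"
  using tangent_ineq[OF cv e x d] unfolding relent_def by (simp add: inner_diff_left inner_diff_right inner_commute)

lemma eta_inv:
  fixes A :: "real^'d \<Rightarrow> real"
  assumes cv: "convex_on N A"
    and A_grad: "\<And>e. e \<in> N \<Longrightarrow> (A has_derivative (\<lambda>h. kappa e \<bullet> h)) (at e)"
    and M_open: "open (kappa ` N)"
    and F_finite: "\<And>k. k \<in> kappa ` N \<Longrightarrow> bdd_above ((\<lambda>e. e \<bullet> k - A e) ` N)"
    and F_grad: "\<And>k. k \<in> kappa ` N \<Longrightarrow> (conj N A has_derivative (\<lambda>h. etamap k \<bullet> h)) (at k)"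
    and e: "e \<in> N"
  shows "etamap (kappa e) = e"
proof -
  define k where "k = kappa e"
  have kM: "k \<in> kappa ` N" using e k_def by auto
  have ck: "conj N A k = e \<bullet> k - A e"
    unfolding conj_def
  proof (rule cSup_eq_maximum)
    show "e \<bullet> k - A e \<in> (\<lambda>e. e \<bullet> k - A e) ` N" using e by auto
    fix z assume "z \<in> (\<lambda>e. e \<bullet> k - A e) ` N"
    then obtain y where y: "y \<in> N" "z = y \<bullet> k - A y" by auto
    have "A e + k \<bullet> (y - e) \<le> A y" using tangent_ineq[OF cv e y(1) A_grad[OF e]] k_def by simp
    then show "z \<le> e \<bullet> k - A e" using y by (simp add: inner_diff_right inner_commute)
  qed
  have ge: "conj N A k - e \<bullet> k \<le> conj N A k' - e \<bullet> k'" if "k' \<in> kappa ` N" for k'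
  proof -
    have "e \<bullet> k' - A e \<le> conj N A k'" unfolding conj_def
      by (rule cSup_upper) (use e F_finite[OF that] in auto)
    then show ?thesis using ck by simp
  qed
  have der: "((\<lambda>k'. conj N A k' - e \<bullet> k') has_derivative (\<lambda>h. etamap k \<bullet> h - e \<bullet> h)) (at k)"
    by (intro has_derivative_diff F_grad[OF kM] bounded_linear_imp_has_derivative bounded_linear_inner_right)
  have "(\<lambda>h. etamap k \<bullet> h - e \<bullet> h) = (\<lambda>v. 0)"
    by (rule differential_zero_maxmin[OF kM M_open der]) (use ge in auto)
  then have "etamap k \<bullet> (etamap k - e) - e \<bullet> (etamap k - e) = 0" by metis
  then have "(etamap k - e) \<bullet> (etamap k - e) = 0" by (simp add: inner_diff_left)
  then show ?thesis using k_def by simp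
qed

lemma relent_zero:
  fixes A :: "real^'d \<Rightarrow> real"
  assumes cv: "convex_on N A" and N_open: "open N"
    and A_grad: "\<And>e. e \<in> N \<Longrightarrow> (A has_derivative (\<lambda>h. kappa e \<bullet> h)) (at e)"
    and inv: "\<And>e. e \<in> N \<Longrightarrow> etamap (kappa e) = e"
    and e: "e \<in> N" and x: "x \<in> N" and z: "relent A kappa e x = 0"
  shows "x = e"
proof -
  have le: "A x - kappa e \<bullet> x \<le> A y - kappa e \<bullet> y" if y: "y \<in> N" for y
  proof -
    have "A e + kappa e \<bullet> (y - e) \<le> A y" by (rule tangent_ineq[OF cv e y A_grad[OF e]])
    then show ?thesis using z unfolding relent_def by (simp add: inner_diff_left inner_diff_right inner_commute)
  qed
  have der: "((\<lambda>y. A y - kappa e \<bullet> y) has_derivative (\<lambda>h. kappa x \<bullet> h - kappa e \<bullet> h)) (at x)"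
    by (intro has_derivative_diff A_grad[OF x] bounded_linear_imp_has_derivative bounded_linear_inner_right)
  have "(\<lambda>h. kappa x \<bullet> h - kappa e \<bullet> h) = (\<lambda>v. 0)"
    by (rule differential_zero_maxmin[OF x N_open der]) (use le in auto)
  then have "kappa x \<bullet> (kappa x - kappa e) - kappa e \<bullet> (kappa x - kappa e) = 0" by metis
  then have "(kappa x - kappa e) \<bullet> (kappa x - kappa e) = 0" by (simp add: inner_diff_left)
  then have "kappa x = kappa e" by simp
  then show ?thesis using inv[OF x] inv[OF e] by metis
qed

lemma bregman_id:
  fixes A :: "real^'d \<Rightarrow> real"
  assumes "w1 *\<^sub>R kappa e1 + w2 *\<^sub>R kappa e2 = (w1 + w2) *\<^sub>R kappa y"
  shows "w1 * relent A kappa e1 x + w2 * relent A kappa e2 x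
       = w1 * relent A kappa e1 y + w2 * relent A kappa e2 y + (w1 + w2) * relent A kappa y x"
proof -
  have "(y - x) \<bullet> (w1 *\<^sub>R kappa e1 + w2 *\<^sub>R kappa e2) = (y - x) \<bullet> ((w1 + w2) *\<^sub>R kappa y)"
    using assms by simp
  then have "w1 * ((y - x) \<bullet> kappa e1) + w2 * ((y - x) \<bullet> kappa e2) = (w1 + w2) * ((y - x) \<bullet> kappa y)"
    by (simp add: inner_add_right)
  then show ?thesis unfolding relent_def
    by (simp add: inner_diff_left algebra_simps)
qed


lemma probvec_facts:
  assumes l: "l \<in> probvec K" and i: "i \<in> {1..K}" and K3: "K \<ge> 3"
  shows "\<And>j. j\<in>{1..K} \<Longrightarrow> 0 \<le> l j"
    and "(\<Sum>j\<in>{1..K}-{i}. l j) = 1 - l i"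
    and "\<And>j. j\<in>{1..K} \<Longrightarrow> j\<noteq>i \<Longrightarrow> 0 \<le> 1 - l i - l j"
    and "0 \<le> l i" "l i \<le> 1"
    and "\<exists>j\<in>{1..K}-{i}. (1 - l i)/(real K - 1) \<le> l j"
    and "(\<exists>j0\<in>{1..K}-{i}. l j0 \<noteq> (1 - l i)/(real K - 1)) \<Longrightarrow> \<exists>j\<in>{1..K}-{i}. (1 - l i)/(real K - 1) < l j"
proof -
  have nn: "\<And>j. j\<in>{1..K} \<Longrightarrow> 0 \<le> l j" and s1: "(\<Sum>j=1..K. l j) = 1"
    using l unfolding probvec_def by auto
  show "\<And>j. j\<in>{1..K} \<Longrightarrow> 0 \<le> l j" by (rule nn)
  have ps: "(\<Sum>j\<in>{1..K}-{i}. l j) = 1 - l i"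
    using sum.remove[of "{1..K}" i l] i s1 by simp
  show "(\<Sum>j\<in>{1..K}-{i}. l j) = 1 - l i" by (rule ps)
  show "\<And>j. j\<in>{1..K} \<Longrightarrow> j\<noteq>i \<Longrightarrow> 0 \<le> 1 - l i - l j"
  proof -
    fix j assume j: "j\<in>{1..K}" "j\<noteq>i"
    have "(\<Sum>j\<in>{1..K}-{i}. l j) = l j + (\<Sum>j\<in>{1..K}-{i}-{j}. l j)"
      using sum.remove[of "{1..K}-{i}" j l] j by simp
    moreover have "0 \<le> (\<Sum>j\<in>{1..K}-{i}-{j}. l j)" by (rule sum_nonneg) (use nn in auto)
    ultimately show "0 \<le> 1 - l i - l j" using ps by simp
  qed
  show "0 \<le> l i" using nn i by simp
  have "0 \<le> (\<Sum>j\<in>{1..K}-{i}. l j)" by (rule sum_nonneg) (use nn in auto)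
  then show "l i \<le> 1" using ps by simp
  have card: "card ({1..K}-{i}) = K - 1" using i by simp
  have rk: "real (K - 1) = real K - 1" using K3 by (simp add: of_nat_diff)
  define avg where "avg = (1 - l i)/(real K - 1)"
  have savg: "(\<Sum>j\<in>{1..K}-{i}. avg) = 1 - l i"
    using card rk K3 by (simp add: avg_def)
  have ne: "{1..K}-{i} \<noteq> {}"
  proof -
    have "(if i = 1 then 2 else 1) \<in> {1..K}-{i}" using K3 by auto
    then show ?thesis by blast
  qed
  show "\<exists>j\<in>{1..K}-{i}. (1 - l i)/(real K - 1) \<le> l j"
  proof (rule ccontr)
    assume "\<not> ?thesis"
    then have "\<And>j. j \<in> {1..K}-{i} \<Longrightarrow> l j < avg" unfolding avg_def by (meson not_le)
    then have "(\<Sum>j\<in>{1..K}-{i}. l j) < (\<Sum>j\<in>{1..K}-{i}. avg)"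
      by (intro sum_strict_mono ne) auto
    then show False using ps savg by simp
  qed
  show "(\<exists>j0\<in>{1..K}-{i}. l j0 \<noteq> (1 - l i)/(real K - 1)) \<Longrightarrow> \<exists>j\<in>{1..K}-{i}. (1 - l i)/(real K - 1) < l j"
  proof (rule ccontr)
    assume ex: "\<exists>j0\<in>{1..K}-{i}. l j0 \<noteq> (1 - l i)/(real K - 1)"
      and "\<not> (\<exists>j\<in>{1..K}-{i}. (1 - l i)/(real K - 1) < l j)"
    then have le: "\<forall>j\<in>{1..K}-{i}. l j \<le> avg" unfolding avg_def by (meson not_le)
    from ex le have "\<exists>j\<in>{1..K}-{i}. l j < avg" by (force simp: avg_def)
    with le have "(\<Sum>j\<in>{1..K}-{i}. l j) < (\<Sum>j\<in>{1..K}-{i}. avg)"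
      by (intro sum_strict_mono_ex1) auto
    then show False using ps savg by simp
  qed
qed

theorem proposition2:
  fixes N :: "(real^'d) set"
    and A :: "real^'d \<Rightarrow> real"
    and kappa :: "real^'d \<Rightarrow> real^'d"
    and etamap :: "real^'d \<Rightarrow> real^'d"
    and K i :: nat
    and e1 e2 :: "real^'d"
  assumes N_open: "open N" and N_convex: "convex N"
    and A_convex: "convex_on N A"
    and A_grad: "\<And>e. e \<in> N \<Longrightarrow> (A has_derivative (\<lambda>h. kappa e \<bullet> h)) (at e)"
    and A_C2: "\<exists>DA. (\<forall>e\<in>N. (kappa has_derivative blinfun_apply (DA e)) (at e)) \<and> continuous_on N DA"
    and M_open: "open (kappa ` N)" and M_convex: "convex (kappa ` N)"
    and F_finite: "\<And>k. k \<in> kappa ` N \<Longrightarrow> bdd_above ((\<lambda>e. e \<bullet> k - A e) ` N)"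
    and F_grad: "\<And>k. k \<in> kappa ` N \<Longrightarrow> (conj N A has_derivative (\<lambda>h. etamap k \<bullet> h)) (at k)"
    and F_C2: "\<exists>DF. (\<forall>k\<in>kappa ` N. (etamap has_derivative blinfun_apply (DF k)) (at k))
                   \<and> continuous_on (kappa ` N) DF"
    and K3: "K \<ge> 3" and i: "i \<in> {1..K}"
    and e1: "e1 \<in> N" and e2: "e2 \<in> N" and neq: "e1 \<noteq> e2"
  defines "c \<equiv> (real K - 2) / (real K - 1)"
  defines "g \<equiv> (\<lambda>t::real.
      let kt = (1 / (t + (1 - t) * c)) *\<^sub>R (t *\<^sub>R kappa e1 + ((1 - t) * c) *\<^sub>R kappa e2);
          et = etamap kt
      in t * relent A kappa e1 et + (1 - t) * c * relent A kappa e2 et)"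
  shows "Dstar N A kappa K i e1 e2 = Sup (g ` {0..1})
     \<and> (\<exists>t\<in>{0..1}. \<forall>s\<in>{0..1}. g s \<le> g t)
     \<and> (\<exists>l\<in>probvec K. Dinner N A kappa K i e1 e2 l = Dstar N A kappa K i e1 e2)
     \<and> (\<forall>l\<in>probvec K. Dinner N A kappa K i e1 e2 l = Dstar N A kappa K i e1 e2 \<longrightarrow>
          (\<forall>j\<in>{1..K}. j \<noteq> i \<longrightarrow> l j = (1 - l i) / (real K - 1)))"
proof -
  have c_pos: "0 < c" and c_lt: "c < 1" and c_eq: "c = 1 - 1/(real K - 1)"
    using K3 unfolding c_def by (auto simp: field_simps)
  have inv: "\<And>e. e \<in> N \<Longrightarrow> etamap (kappa e) = e"
    using eta_inv[OF A_convex A_grad M_open F_finite F_grad] by blast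
  have rnn: "\<And>e x. e\<in>N \<Longrightarrow> x\<in>N \<Longrightarrow> 0 \<le> relent A kappa e x"
    using relent_nonneg A_convex A_grad by blast
  have rz: "\<And>e x. e\<in>N \<Longrightarrow> x\<in>N \<Longrightarrow> relent A kappa e x = 0 \<Longrightarrow> x = e"
    using relent_zero[OF A_convex N_open A_grad inv] by blast
  have r0: "\<And>e. relent A kappa e e = 0" by (simp add: relent_def)
  define w where "w t = t + (1-t)*c" for t
  define kt where "kt t = (1 / w t) *\<^sub>R (t *\<^sub>R kappa e1 + ((1 - t) * c) *\<^sub>R kappa e2)" for t
  define et where "et t = etamap (kt t)" for t
  have g_eq: "g t = t * relent A kappa e1 (et t) + (1 - t) * c * relent A kappa e2 (et t)" for t
    unfolding g_def et_def kt_def w_def Let_def by simp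
  have w_pos: "0 < w t" if "t \<in> {0..1}" for t
  proof -
    have "0 \<le> t * (1 - c)" using that c_lt by auto
    then show ?thesis using c_pos by (simp add: w_def algebra_simps)
  qed
  have kt_in: "kt t \<in> kappa ` N" if t: "t \<in> {0..1}" for t
  proof -
    have "kt t = (t / w t) *\<^sub>R kappa e1 + ((1 - t) * c / w t) *\<^sub>R kappa e2"
      by (simp add: kt_def scaleR_add_right)
    moreover have "(t / w t) *\<^sub>R kappa e1 + ((1 - t) * c / w t) *\<^sub>R kappa e2 \<in> kappa ` N"
    proof (rule convexD[OF M_convex])
      show "kappa e1 \<in> kappa ` N" "kappa e2 \<in> kappa ` N" using e1 e2 by auto
      show "0 \<le> t / w t" "0 \<le> (1 - t) * c / w t" using t w_pos[OF t] c_pos by auto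
      have "t / w t + (1 - t) * c / w t = w t / w t" by (simp only: w_def add_divide_distrib[symmetric])
      then show "t / w t + (1 - t) * c / w t = 1" using w_pos[OF t] by simp
    qed
    ultimately show ?thesis by simp
  qed
  have et_N: "et t \<in> N" and k_et: "kappa (et t) = kt t" if t: "t \<in> {0..1}" for t
  proof -
    obtain z where z: "z \<in> N" "kt t = kappa z" using kt_in[OF t] by auto
    have "et t = z" using inv[OF z(1)] z(2) by (simp add: et_def)
    then show "et t \<in> N" "kappa (et t) = kt t" using z by auto
  qed
  have comb: "t *\<^sub>R kappa e1 + ((1-t)*c) *\<^sub>R kappa e2 = (t + (1-t)*c) *\<^sub>R kappa (et t)"
    if t: "t \<in> {0..1}" for t
    using k_et[OF t] w_pos[OF t] by (simp add: kt_def w_def)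
  have g_le: "g t \<le> t * relent A kappa e1 x + (1-t)*c * relent A kappa e2 x"
    if t: "t \<in> {0..1}" and x: "x \<in> N" for t x
  proof -
    have "t * relent A kappa e1 x + ((1-t)*c) * relent A kappa e2 x
       = t * relent A kappa e1 (et t) + ((1-t)*c) * relent A kappa e2 (et t)
         + (t + (1-t)*c) * relent A kappa (et t) x"
      by (rule bregman_id[where kappa=kappa and ?e1.0=e1 and ?e2.0=e2 and y="et t", OF comb[OF t]])
    moreover have "0 \<le> (t + (1-t)*c) * relent A kappa (et t) x"
      using w_pos[OF t] rnn[OF et_N[OF t] x] by (simp add: w_def)
    ultimately show ?thesis by (simp add: g_eq)
  qed
  have j0: "(if i = 1 then 2 else 1) \<in> {1..K}" "(if i = 1 then 2 else (1::nat)) \<noteq> i"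
    using K3 i by auto
  have Din_le: "Dinner N A kappa K i e1 e2 l \<le> l i * relent A kappa e1 y + l j * relent A kappa e2 x
        + (1 - l i - l j) * relent A kappa e2 y"
    if l: "l \<in> probvec K" and j: "j \<in> {1..K}" "j \<noteq> i" and x: "x \<in> N" and y: "y \<in> N" for l j x y
    unfolding Dinner_def
  proof (rule cInf_lower)
    show "l i * relent A kappa e1 y + l j * relent A kappa e2 x + (1 - l i - l j) * relent A kappa e2 y
      \<in> {l i * relent A kappa e1 e2' + l j * relent A kappa e2 e1' + (1 - l i - l j) * relent A kappa e2 e2' |
          e1' e2' j. e1' \<in> N \<and> e2' \<in> N \<and> j \<in> {1..K} \<and> j \<noteq> i}" using j x y by blast
    show "bdd_below {l i * relent A kappa e1 e2' + l j * relent A kappa e2 e1' + (1 - l i - l j) * relent A kappa e2 e2' |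
          e1' e2' j. e1' \<in> N \<and> e2' \<in> N \<and> j \<in> {1..K} \<and> j \<noteq> i}"
    proof (rule bdd_belowI[of _ 0], clarify)
      fix e1' e2' j assume h: "e1' \<in> N" "e2' \<in> N" "j \<in> {1..K}" "j \<noteq> i"
      have "0 \<le> l i" "0 \<le> l j" "0 \<le> 1 - l i - l j"
        using probvec_facts(1,3,4)[OF l i K3] h by auto
      then show "0 \<le> l i * relent A kappa e1 e2' + l j * relent A kappa e2 e1' + (1 - l i - l j) * relent A kappa e2 e2'"
        using rnn[OF e1 h(2)] rnn[OF e2 h(1)] rnn[OF e2 h(2)] by simp
    qed
  qed
  have Din_ge: "b \<le> Dinner N A kappa K i e1 e2 l"
    if H: "\<And>j x y. j \<in> {1..K} \<Longrightarrow> j \<noteq> i \<Longrightarrow> x \<in> N \<Longrightarrow> y \<in> N \<Longrightarrow>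
       b \<le> l i * relent A kappa e1 y + l j * relent A kappa e2 x + (1 - l i - l j) * relent A kappa e2 y"
    for l b
    unfolding Dinner_def
  proof (rule cInf_greatest)
    let ?j = "if i = 1 then 2 else (1::nat)"
    have "l i * relent A kappa e1 e1 + l ?j * relent A kappa e2 e1 + (1 - l i - l ?j) * relent A kappa e2 e1
       \<in> {l i * relent A kappa e1 e2' + l j * relent A kappa e2 e1' + (1 - l i - l j) * relent A kappa e2 e2' |
          e1' e2' j. e1' \<in> N \<and> e2' \<in> N \<and> j \<in> {1..K} \<and> j \<noteq> i}"
      using j0 e1 by blast
    then show "{l i * relent A kappa e1 e2' + l j * relent A kappa e2 e1' + (1 - l i - l j) * relent A kappa e2 e2' |
          e1' e2' j. e1' \<in> N \<and> e2' \<in> N \<and> j \<in> {1..K} \<and> j \<noteq> i} \<noteq> {}" by blast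
    fix z assume "z \<in> {l i * relent A kappa e1 e2' + l j * relent A kappa e2 e1' + (1 - l i - l j) * relent A kappa e2 e2' |
          e1' e2' j. e1' \<in> N \<and> e2' \<in> N \<and> j \<in> {1..K} \<and> j \<noteq> i}"
    then obtain x y j where "z = l i * relent A kappa e1 y + l j * relent A kappa e2 x + (1 - l i - l j) * relent A kappa e2 y"
      "x \<in> N" "y \<in> N" "j \<in> {1..K}" "j \<noteq> i" by blast
    then show "b \<le> z" using H by simp
  qed
  have Dup: "Dinner N A kappa K i e1 e2 l \<le> g (l i)" if l: "l \<in> probvec K" for l
  proof -
    let ?a = "l i"
    have a: "?a \<in> {0..1}" using probvec_facts(4,5)[OF l i K3] by auto
    obtain j where j: "j \<in> {1..K}-{i}" "(1 - ?a)/(real K - 1) \<le> l j"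
      using probvec_facts(6)[OF l i K3] by blast
    have "(1 - ?a) * c = (1 - ?a) - (1 - ?a)/(real K - 1)" by (simp add: c_eq algebra_simps)
    then have co: "1 - ?a - l j \<le> (1 - ?a) * c" using j by simp
    have "Dinner N A kappa K i e1 e2 l \<le> ?a * relent A kappa e1 (et ?a) + l j * relent A kappa e2 e2
        + (1 - ?a - l j) * relent A kappa e2 (et ?a)"
      using Din_le[OF l _ _ e2 et_N[OF a]] j by auto
    also have "\<dots> \<le> ?a * relent A kappa e1 (et ?a) + (1 - ?a) * c * relent A kappa e2 (et ?a)"
      using mult_right_mono[OF co rnn[OF e2 et_N[OF a]]] by (simp add: r0)
    finally show ?thesis by (simp add: g_eq)
  qed
  define lt where "lt t = (\<lambda>j. if j = i then t else if j \<in> {1..K} then (1-t)/(real K - 1) else 0)" for t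
  have lt_in: "lt t \<in> probvec K" if t: "t \<in> {0..1}" for t
  proof -
    have card: "card ({1..K}-{i}) = K - 1" using i by simp
    have rk: "real (K - 1) = real K - 1" using K3 by (simp add: of_nat_diff)
    have "(\<Sum>j=1..K. lt t j) = lt t i + (\<Sum>j\<in>{1..K}-{i}. lt t j)"
      using sum.remove[of "{1..K}" i "lt t"] i by simp
    also have "(\<Sum>j\<in>{1..K}-{i}. lt t j) = (\<Sum>j\<in>{1..K}-{i}. (1-t)/(real K - 1))"
      by (rule sum.cong) (auto simp: lt_def)
    also have "\<dots> = 1 - t" using card rk K3 by simp
    finally have "(\<Sum>j=1..K. lt t j) = 1" by (simp add: lt_def)
    moreover have "\<forall>j\<in>{1..K}. 0 \<le> lt t j" using t K3 by (auto simp: lt_def)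
    moreover have "\<forall>j. j \<notin> {1..K} \<longrightarrow> lt t j = 0" using i by (auto simp: lt_def)
    ultimately show ?thesis unfolding probvec_def by blast
  qed
  have Dlt: "Dinner N A kappa K i e1 e2 (lt t) = g t" if t: "t \<in> {0..1}" for t
  proof (rule order.antisym)
    show "Dinner N A kappa K i e1 e2 (lt t) \<le> g t"
      using Dup[OF lt_in[OF t]] by (simp add: lt_def)
    show "g t \<le> Dinner N A kappa K i e1 e2 (lt t)"
    proof (rule Din_ge)
      fix j x y assume j: "j \<in> {1..K}" "j \<noteq> i" and x: "x \<in> N" and y: "y \<in> N"
      have lj: "lt t j = (1-t)/(real K - 1)" "lt t i = t" using j by (auto simp: lt_def)
      have co: "1 - t - (1-t)/(real K - 1) = (1 - t) * c" by (simp add: c_eq algebra_simps)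
      have "0 \<le> (1-t)/(real K - 1) * relent A kappa e2 x" using t K3 rnn[OF e2 x] by simp
      then show "g t \<le> lt t i * relent A kappa e1 y + lt t j * relent A kappa e2 x
            + (1 - lt t i - lt t j) * relent A kappa e2 y"
        using g_le[OF t y] unfolding lj co by simp
    qed
  qed
  have wnz: "\<forall>x\<in>{0..1}. x + (1 - x) * c \<noteq> 0"
    using w_pos unfolding w_def by (metis less_irrefl)
  have cont_kt: "continuous_on {0..1} kt"
    unfolding kt_def w_def
    by (intro continuous_intros) (use wnz in auto)
  have cont_eta: "continuous_on (kappa ` N) etamap"
  proof -
    obtain DF where "\<forall>k\<in>kappa ` N. (etamap has_derivative blinfun_apply (DF k)) (at k)"
      using F_C2 by blast
    then show ?thesis by (intro continuous_at_imp_continuous_on) (auto intro: has_derivative_continuous)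
  qed
  have cont_A: "continuous_on N A"
    by (intro continuous_at_imp_continuous_on) (auto intro: has_derivative_continuous A_grad)
  have cont_et: "continuous_on {0..1} et"
    unfolding et_def by (rule continuous_on_compose2[OF cont_eta cont_kt]) (use kt_in in auto)
  have cont_Aet: "continuous_on {0..1} (\<lambda>t. A (et t))"
    by (rule continuous_on_compose2[OF cont_A cont_et]) (use et_N in auto)
  have g_fun: "g = (\<lambda>t. t * ((e1 - et t) \<bullet> kappa e1 - A e1 + A (et t))
                 + (1 - t) * c * ((e2 - et t) \<bullet> kappa e2 - A e2 + A (et t)))"
    by (rule ext) (simp add: g_eq relent_def)
  have cont_g: "continuous_on {0..1} g"
    unfolding g_fun by (intro continuous_intros cont_et cont_Aet)
  obtain ts where ts: "ts \<in> {0..1}" "\<forall>s\<in>{0..1}. g s \<le> g ts"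
    using continuous_attains_sup[OF compact_Icc _ cont_g] by auto
  define M where "M = g ts"
  have gM: "g s \<le> M" if "s \<in> {0..1}" for s using ts that M_def by auto
  have DstarM: "Dstar N A kappa K i e1 e2 = M"
    unfolding Dstar_def
  proof (rule cSup_eq_maximum)
    show "M \<in> Dinner N A kappa K i e1 e2 ` probvec K"
      using Dlt[OF ts(1)] lt_in[OF ts(1)] M_def by (metis image_eqI)
    fix x assume "x \<in> Dinner N A kappa K i e1 e2 ` probvec K"
    then obtain l where l: "l \<in> probvec K" "x = Dinner N A kappa K i e1 e2 l" by auto
    have "l i \<in> {0..1}" using probvec_facts(4,5)[OF l(1) i K3] by auto
    then show "x \<le> M" using Dup[OF l(1)] gM l(2) by force
  qed
  have supg: "Sup (g ` {0..1}) = M"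
    by (rule cSup_eq_maximum) (use ts M_def gM in auto)
  have half: "(1/2::real) \<in> {0..1}" by simp
  have gpos: "0 < g (1/2)"
  proof -
    have r1: "0 \<le> relent A kappa e1 (et (1/2))" and r2: "0 \<le> relent A kappa e2 (et (1/2))"
      using rnn[OF e1 et_N[OF half]] rnn[OF e2 et_N[OF half]] by auto
    have "g (1/2) \<noteq> 0"
    proof
      assume "g (1/2) = 0"
      then have "(1/2) * relent A kappa e1 (et (1/2)) + (c/2) * relent A kappa e2 (et (1/2)) = 0"
        by (simp add: g_eq)
      moreover have "0 \<le> (1/2) * relent A kappa e1 (et (1/2))" "0 \<le> (c/2) * relent A kappa e2 (et (1/2))"
        using r1 r2 c_pos by simp_all
      ultimately have "(1/2) * relent A kappa e1 (et (1/2)) = 0" "(c/2) * relent A kappa e2 (et (1/2)) = 0"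
        by linarith+
      then have "relent A kappa e1 (et (1/2)) = 0" "relent A kappa e2 (et (1/2)) = 0"
        using c_pos by simp_all
      then show False using rz[OF e1 et_N[OF half]] rz[OF e2 et_N[OF half]] neq by auto
    qed
    moreover have "0 \<le> g (1/2)" using r1 r2 c_pos by (simp add: g_eq)
    ultimately show ?thesis by simp
  qed
  have Mpos: "0 < M" using gpos gM[OF half] by simp
  have part4: "\<forall>j\<in>{1..K}. j \<noteq> i \<longrightarrow> l j = (1 - l i) / (real K - 1)"
    if l: "l \<in> probvec K" and eq: "Dinner N A kappa K i e1 e2 l = Dstar N A kappa K i e1 e2" for l
  proof (rule ccontr)
    assume "\<not> ?thesis"
    then have "\<exists>j0\<in>{1..K}-{i}. l j0 \<noteq> (1 - l i)/(real K - 1)" by auto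
    then obtain j where j: "j \<in> {1..K}-{i}" "(1 - l i)/(real K - 1) < l j"
      using probvec_facts(7)[OF l i K3] by blast
    let ?a = "l i"
    have a: "?a \<in> {0..1}" using probvec_facts(4,5)[OF l i K3] by auto
    have DM: "Dinner N A kappa K i e1 e2 l = M" using eq DstarM by simp
    show False
    proof (cases "?a = 0")
      case True
      have "kt 0 = kappa e2" using c_pos by (simp add: kt_def w_def)
      then have "et 0 = e2" using inv[OF e2] by (simp add: et_def)
      then have "g 0 = 0" by (simp add: g_eq r0)
      then show False using Dup[OF l] True DM Mpos by simp
    next
      case False
      have r2: "0 < relent A kappa e2 (et ?a)"
      proof -
        have "relent A kappa e2 (et ?a) \<noteq> 0"
        proof
          assume "relent A kappa e2 (et ?a) = 0"
          then have "et ?a = e2" by (rule rz[OF e2 et_N[OF a]])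
          then have "?a *\<^sub>R kappa e1 + ((1-?a)*c) *\<^sub>R kappa e2 = (?a + (1-?a)*c) *\<^sub>R kappa e2"
            using comb[OF a] by simp
          then have "?a *\<^sub>R kappa e1 = ?a *\<^sub>R kappa e2" by (simp add: scaleR_left_distrib)
          then have "kappa e1 = kappa e2" using False by simp
          then show False using inv[OF e1] inv[OF e2] neq by metis
        qed
        then show ?thesis using rnn[OF e2 et_N[OF a]] by simp
      qed
      have "(1 - ?a) * c = (1 - ?a) - (1 - ?a)/(real K - 1)" by (simp add: c_eq algebra_simps)
      then have co: "1 - ?a - l j < (1 - ?a) * c" using j by simp
      have "M \<le> ?a * relent A kappa e1 (et ?a) + l j * relent A kappa e2 e2
          + (1 - ?a - l j) * relent A kappa e2 (et ?a)"
        using Din_le[OF l _ _ e2 et_N[OF a]] j DM by auto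
      also have "\<dots> < ?a * relent A kappa e1 (et ?a) + (1 - ?a) * c * relent A kappa e2 (et ?a)"
        using mult_strict_right_mono[OF co r2] by (simp add: r0)
      also have "\<dots> = g ?a" by (simp add: g_eq)
      also have "\<dots> \<le> M" by (rule gM[OF a])
      finally show False by simp
    qed
  qed
  have p3: "\<exists>l\<in>probvec K. Dinner N A kappa K i e1 e2 l = Dstar N A kappa K i e1 e2"
    using DstarM Dlt[OF ts(1)] lt_in[OF ts(1)] M_def by auto
  show ?thesis
    using DstarM supg ts(1,2) p3 part4 by auto
qed

end
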